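(* Let $\mathbb S[\boldsymbol\kappa]$ be a $k\times k$ unstable-negative feedback such that one of its $(k-1)\times(k-1)$ principal submatrices is Hurwitz-stable. Then $\mathbb S[\boldsymbol\kappa]$ is $D$-Hopf.
   Context: For a reaction network with reactant coefficients $s^j_m$ and stoichiometric matrix $\mathbb S$, a $k$-Child-Selection $\boldsymbol\kappa=(\kappa,E_\kappa,J)$ is a bijection $J:\kappa\to E_\kappa$ between $k$ species and $k$ reactions with $s^{J(m)}_m>0$; its CS-matrix is $\mathbb S[\boldsymbol\kappa]_{ml}=\mathbb S_{m,J(l)}$. Hurwitz-stable: all eigenvalues have negative real part; Hurwitz-unstable: some eigenvalue has positive real part. An unstable core is a Hurwitz-unstable CS-matrix with no Hurwitz-unstable proper principal submatrix; a $k\times k$ unstable core with $\operatorname{sign}\det=(-1)^k$ is an unstable-negative feedback. Inertia: numbers of eigenvalues with negative, positive, zero real part. $A$ is $D$-Hopf if there exist an invertible principal submatrix $A[\kappa]$ and positive diagonal $D_1,D_2$ with $\operatorname{inertia}(A[\kappa]D_1)\ne\operatorname{inertia}(A[\kappa]D_2)$. *)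

theory Defs
  imports "Jordan_Normal_Form.Char_Poly" "Jordan_Normal_Form.DL_Submatrix"
    "HOL-Computational_Algebra.Polynomial"
begin

definition spec :: "real mat \<Rightarrow> complex multiset" where
  "spec A = proots (char_poly (map_mat complex_of_real A))"

definition hurwitz_stable :: "real mat \<Rightarrow> bool" where
  "hurwitz_stable A \<longleftrightarrow> (\<forall>z \<in># spec A. Re z < 0)"

definition hurwitz_unstable :: "real mat \<Rightarrow> bool" where
  "hurwitz_unstable A \<longleftrightarrow> (\<exists>z \<in># spec A. Re z > 0)"

definition inertia :: "real mat \<Rightarrow> nat \<times> nat \<times> nat" where
  "inertia A = (size (filter_mset (\<lambda>z. Re z < 0) (spec A)),
                size (filter_mset (\<lambda>z. Re z > 0) (spec A)),
                size (filter_mset (\<lambda>z. Re z = 0) (spec A)))"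

definition principal_sub :: "real mat \<Rightarrow> nat set \<Rightarrow> real mat" where
  "principal_sub A I = submatrix A I I"

definition unstable_core :: "real mat \<Rightarrow> bool" where
  "unstable_core A \<longleftrightarrow> square_mat A \<and> hurwitz_unstable A \<and>
     (\<forall>I. I \<subset> {0..<dim_row A} \<longrightarrow> \<not> hurwitz_unstable (principal_sub A I))"

definition unstable_negative_feedback :: "real mat \<Rightarrow> bool" where
  "unstable_negative_feedback A \<longleftrightarrow> unstable_core A \<and>
     sgn (det A) = (-1) ^ dim_row A"

definition pos_diag :: "nat \<Rightarrow> real mat \<Rightarrow> bool" where
  "pos_diag n D \<longleftrightarrow> D \<in> carrier_mat n n \<and> diagonal_mat D \<and> (\<forall>i<n. D $$ (i,i) > 0)"

definition D_Hopf :: "real mat \<Rightarrow> bool" where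
  "D_Hopf A \<longleftrightarrow> (\<exists>I \<subseteq> {0..<dim_row A}. \<exists>D1 D2.
     invertible_mat (principal_sub A I) \<and>
     pos_diag (card I) D1 \<and> pos_diag (card I) D2 \<and>
     inertia (principal_sub A I * D1) \<noteq> inertia (principal_sub A I * D2))"

text \<open>Reaction network with species 0..<n and reactions 0..<r, reactant coefficients
 s (n x r, nonnegative), product coefficients p (nonnegative), stoichiometric matrix
 S = p - s.\<close>

definition child_selection ::
  "real mat \<Rightarrow> nat \<Rightarrow> nat set \<Rightarrow> nat set \<Rightarrow> (nat \<Rightarrow> nat) \<Rightarrow> bool" where
  "child_selection s k \<kappa> E J \<longleftrightarrow> \<kappa> \<subseteq> {0..<dim_row s} \<and> E \<subseteq> {0..<dim_col s} \<and>
     card \<kappa> = k \<and> bij_betw J \<kappa> E \<and> (\<forall>m\<in>\<kappa>. s $$ (m, J m) > 0)"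

definition CS_matrix :: "real mat \<Rightarrow> nat set \<Rightarrow> (nat \<Rightarrow> nat) \<Rightarrow> real mat" where
  "CS_matrix S \<kappa> J = mat (card \<kappa>) (card \<kappa>) (\<lambda>(i,j). S $$ (pick \<kappa> i, J (pick \<kappa> j)))"

end

theory Submission
  imports Defs "HOL-Analysis.Analysis"
begin


lemma pick_delete:
  assumes "j < k" "i < k - 1"
  shows "pick ({0..<k} - {j}) i = insert_index j i"
proof -
  let ?S = "{0..<k} - {j}"
  have cS: "card ?S = k - 1" using assms by auto
  define x where "x = pick ?S i"
  have xS: "x \<in> ?S" unfolding x_def by (rule pick_in_set_le, metis cS assms(2))
  have cx: "card {a\<in>?S. a < x} = i" unfolding x_def by (rule card_pick_le, metis cS assms(2))
  have eq: "{a\<in>?S. a < x} = {0..<x} - {j}" using xS by auto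
  show ?thesis
  proof (cases "j < x")
    case True
    then have "card {a\<in>?S. a < x} = x - 1" unfolding eq by simp
    then show ?thesis using cx True unfolding x_def[symmetric] by (auto simp: insert_index_def)
  next
    case False
    then have "x < j" using xS by auto
    then have "card {a\<in>?S. a < x} = x" unfolding eq by simp
    then show ?thesis using cx \<open>x < j\<close> unfolding x_def[symmetric] by (auto simp: insert_index_def)
  qed
qed

lemma pick_full:
  assumes "i < k"
  shows "pick {0..<k} i = i"
proof -
  define x where "x = pick {0..<k} i"
  have xS: "x \<in> {0..<k}" unfolding x_def by (rule pick_in_set_le, simp add: assms)
  have cx: "card {a\<in>{0..<k}. a < x} = i" unfolding x_def by (rule card_pick_le, simp add: assms)
  have "{a\<in>{0..<k}. a < x} = {0..<x}" using xS by auto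
  then show ?thesis using cx x_def by simp
qed

lemma principal_sub_delete:
  assumes A: "A \<in> carrier_mat k k" and j: "j < k"
  shows "principal_sub A ({0..<k} - {j}) = mat_delete A j j"
proof -
  have c: "{i. i < dim_row A \<and> i \<in> {0..<k} - {j}} = {0..<k} - {j}"
          "{i. i < dim_col A \<and> i \<in> {0..<k} - {j}} = {0..<k} - {j}" using A by auto
  show ?thesis
    unfolding principal_sub_def
  proof (rule eq_matI)
    show "dim_row (submatrix A ({0..<k} - {j}) ({0..<k} - {j})) = dim_row (mat_delete A j j)"
      unfolding dim_submatrix c using A j by simp
    show "dim_col (submatrix A ({0..<k} - {j}) ({0..<k} - {j})) = dim_col (mat_delete A j j)"
      unfolding dim_submatrix c using A j by simp
    fix a b assume "a < dim_row (mat_delete A j j)" "b < dim_col (mat_delete A j j)"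
    then have ab: "a < k - 1" "b < k - 1" using A by auto
    have "submatrix A ({0..<k} - {j}) ({0..<k} - {j}) $$ (a, b) = A $$ (insert_index j a, insert_index j b)"
      by (subst submatrix_index, unfold c, insert ab j, auto simp: pick_delete)
    also have "\<dots> = mat_delete A j j $$ (a,b)" using ab A j
      by (simp add: mat_delete_def insert_index_def)
    finally show "submatrix A ({0..<k} - {j}) ({0..<k} - {j}) $$ (a, b) = mat_delete A j j $$ (a,b)" .
  qed
qed

lemma principal_sub_full:
  assumes A: "A \<in> carrier_mat k k"
  shows "principal_sub A {0..<k} = A"
proof -
  have c: "{i. i < dim_row A \<and> i \<in> {0..<k}} = {0..<k}"
          "{i. i < dim_col A \<and> i \<in> {0..<k}} = {0..<k}" using A by auto
  show ?thesis unfolding principal_sub_def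
  proof (rule eq_matI)
    show "dim_row (submatrix A {0..<k} {0..<k}) = dim_row A" unfolding dim_submatrix c using A by simp
    show "dim_col (submatrix A {0..<k} {0..<k}) = dim_col A" unfolding dim_submatrix c using A by simp
    fix a b assume "a < dim_row A" "b < dim_col A"
    then have ab: "a < k" "b < k" using A by auto
    show "submatrix A {0..<k} {0..<k} $$ (a, b) = A $$ (a,b)"
      by (subst submatrix_index, unfold c, insert ab, auto simp: pick_full)
  qed
qed

lemma mult_diag:
  fixes A :: "'a::comm_ring_1 mat"
  assumes A: "A \<in> carrier_mat k k"
  shows "A * Matrix.mat k k (\<lambda>(a,b). if a = b then d a else 0) = Matrix.mat k k (\<lambda>(i,l). A $$ (i,l) * d l)"
proof (rule eq_matI)
  fix i l assume il: "i < dim_row (Matrix.mat k k (\<lambda>(i,l). A $$ (i,l) * d l))" "l < dim_col (Matrix.mat k k (\<lambda>(i,l). A $$ (i,l) * d l))"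
  then have "i < k" "l < k" by auto
  then show "(A * Matrix.mat k k (\<lambda>(a,b). if a = b then d a else 0)) $$ (i,l) = Matrix.mat k k (\<lambda>(i,l). A $$ (i,l) * d l) $$ (i,l)"
    using A by (simp add: scalar_prod_def Matrix.row_def Matrix.col_def if_distrib[of "(*) _"] cong: if_cong)
qed (use A in auto)

lemma det_col_comb:
  fixes M M1 M2 :: "'a::comm_ring_1 mat"
  assumes M: "M \<in> carrier_mat n n" and M1: "M1 \<in> carrier_mat n n" and M2: "M2 \<in> carrier_mat n n"
  and j: "j < n"
  and off: "\<And>i l. i < n \<Longrightarrow> l < n \<Longrightarrow> l \<noteq> j \<Longrightarrow> M1 $$ (i,l) = M $$ (i,l) \<and> M2 $$ (i,l) = M $$ (i,l)"
  and col: "\<And>i. i < n \<Longrightarrow> M $$ (i,j) = a * M1 $$ (i,j) + b * M2 $$ (i,j)"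
  shows "Determinant.det M = a * Determinant.det M1 + b * Determinant.det M2"
proof -
  have cof: "cofactor M1 i j = cofactor M i j \<and> cofactor M2 i j = cofactor M i j" if i: "i < n" for i
  proof -
    have "mat_delete M1 i j = mat_delete M i j \<and> mat_delete M2 i j = mat_delete M i j"
      using M M1 M2 i j off by (auto intro!: eq_matI simp: mat_delete_def)
    then show ?thesis unfolding cofactor_def by simp
  qed
  have "Determinant.det M = (\<Sum>i<n. M $$ (i,j) * cofactor M i j)" by (rule laplace_expansion_column[OF M j])
  also have "\<dots> = (\<Sum>i<n. a * (M1 $$ (i,j) * cofactor M1 i j) + b * (M2 $$ (i,j) * cofactor M2 i j))"
    by (rule sum.cong, auto simp: col cof algebra_simps)
  also have "\<dots> = a * Determinant.det M1 + b * Determinant.det M2"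
    unfolding sum.distrib sum_distrib_left[symmetric]
      laplace_expansion_column[OF M1 j, symmetric] laplace_expansion_column[OF M2 j, symmetric] ..
  finally show ?thesis .
qed



lemma char_poly_split:
  fixes A :: "'a::idom mat"
  assumes A: "A \<in> carrier_mat k k" and j: "j < k"
  shows "char_poly (Matrix.mat k k (\<lambda>(i,l). A $$ (i,l) * (if l = j then t else 1)))
       = Polynomial.smult t (char_poly A) + Polynomial.smult (1 - t) (monom 1 1 * char_poly (mat_delete A j j))"
proof -
  define M where "M = Matrix.mat k k (\<lambda>(i,l). A $$ (i,l) * (if l = j then t else 1))"
  define A0 where "A0 = Matrix.mat k k (\<lambda>(i,l). if l = j then 0 else A $$ (i,l))"
  have M: "M \<in> carrier_mat k k" and A0: "A0 \<in> carrier_mat k k" unfolding M_def A0_def by auto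
  have "Determinant.det (char_poly_matrix M) = [:t:] * Determinant.det (char_poly_matrix A) + [:1-t:] * Determinant.det (char_poly_matrix A0)"
  proof (rule det_col_comb[OF _ _ _ j])
    fix i l assume "i < k" "l < k" "l \<noteq> j"
    then show "char_poly_matrix A $$ (i, l) = char_poly_matrix M $$ (i, l) \<and>
           char_poly_matrix A0 $$ (i, l) = char_poly_matrix M $$ (i, l)"
      using A unfolding char_poly_matrix_def M_def A0_def by auto
  next
    fix i assume "i < k"
    then show "char_poly_matrix M $$ (i, j) = [:t:] * char_poly_matrix A $$ (i, j) + [:1 - t:] * char_poly_matrix A0 $$ (i, j)"
      using A j unfolding char_poly_matrix_def M_def A0_def by (auto simp: algebra_simps)
  qed (use M A A0 in auto)
  moreover have "char_poly A0 = monom 1 1 * char_poly (mat_delete A0 j j)"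
    by (rule char_poly_0_column[OF _ A0 j], insert j, auto simp: A0_def)
  moreover have "mat_delete A0 j j = mat_delete A j j"
    using A j by (auto intro!: eq_matI simp: mat_delete_def A0_def)
  ultimately show ?thesis unfolding M_def[symmetric] char_poly_def
    by simp
qed



lemma core:
  fixes f g :: "complex \<Rightarrow> complex" and R :: real
  assumes cf: "continuous_on UNIV f" and cg: "continuous_on UNIV g"
  and gnz: "\<And>z. 0 \<le> Re z \<Longrightarrow> g z \<noteq> 0"
  and pos: "Re (f 0 / g 0) > 0"
  shows "\<exists>t::real. 0 < t \<and> t < 1 \<and> (\<forall>z. 0 \<le> Re z \<longrightarrow> norm z \<le> R \<longrightarrow>
            of_real (1-t) * z * g z + of_real t * f z \<noteq> 0)"
proof -
  define c where "c = Re (f 0 / g 0)"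
  have g0: "g 0 \<noteq> 0" using gnz by simp
  have "isCont (\<lambda>z. f z / g z) 0"
    using cf cg g0 by (intro continuous_intros) (auto simp: continuous_on_eq_continuous_at)
  then have "\<forall>e>0. \<exists>d>0. \<forall>y. dist y 0 < d \<longrightarrow> dist (f y / g y) (f 0 / g 0) < e"
    unfolding continuous_at_eps_delta .
  then obtain \<delta> where d: "\<delta> > 0" and dd: "\<And>z. dist z 0 < \<delta> \<Longrightarrow> dist (f z / g z) (f 0 / g 0) < c"
    using pos c_def by blast
  have near: "Re (f z / g z) > 0" if "norm z < \<delta>" for z
  proof -
    have "norm (f z / g z - f 0 / g 0) < c" using dd[of z] that by (simp add: dist_norm)
    then have "\<bar>Re (f z / g z - f 0 / g 0)\<bar> < c" using abs_Re_le_cmod le_less_trans by blast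
    then show ?thesis unfolding c_def by simp
  qed
  define K where "K = {z. 0 \<le> Re z \<and> \<delta> \<le> norm z \<and> norm z \<le> R}"
  have Kc: "compact K"
  proof -
    have "closed K" unfolding K_def
      by (intro closed_Collect_conj closed_Collect_le continuous_intros)
    moreover have "bounded K" unfolding K_def bounded_iff by auto
    ultimately show ?thesis using compact_eq_bounded_closed by blast
  qed
  have "\<exists>m>0. \<exists>M\<ge>0. \<forall>z\<in>K. m \<le> norm (z * g z) \<and> norm (f z) \<le> M"
  proof (cases "K = {}")
    case True then show ?thesis by (intro exI[of _ 1]) auto
  next
    case False
    have c1: "continuous_on K (\<lambda>z. norm (z * g z))"
      using cg by (intro continuous_intros) (auto intro: continuous_on_subset)
    have c2: "continuous_on K (\<lambda>z. norm (f z))"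
      using cf by (intro continuous_intros) (auto intro: continuous_on_subset)
    obtain x where x: "x \<in> K" "\<forall>y\<in>K. norm (x * g x) \<le> norm (y * g y)"
      using continuous_attains_inf[OF Kc False c1] by blast
    obtain y where y: "y \<in> K" "\<forall>z\<in>K. norm (f z) \<le> norm (f y)"
      using continuous_attains_sup[OF Kc False c2] by blast
    have "norm (x * g x) > 0" using x(1) d gnz[of x] unfolding K_def by auto
    then show ?thesis using x y by (intro exI[of _ "norm (x * g x)"] conjI exI[of _ "norm (f y)"]) auto
  qed
  then obtain m M where m: "m > 0" and M: "M \<ge> 0" and mM: "\<And>z. z \<in> K \<Longrightarrow> m \<le> norm (z * g z) \<and> norm (f z) \<le> M"
    by blast
  define t where "t = m / (2 * (m + M))"
  have t0: "0 < t" unfolding t_def using m M by auto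
  have t1: "t < 1" unfolding t_def using m M by (auto simp: field_simps)
  have tmM: "t * (m + M) = m / 2" unfolding t_def using m M by (auto simp: field_simps)
  show ?thesis
  proof (intro exI[of _ t] conjI allI impI t0 t1)
    fix z :: complex assume z: "0 \<le> Re z" "norm z \<le> R"
    show "of_real (1-t) * z * g z + of_real t * f z \<noteq> 0"
    proof
      assume eq: "of_real (1-t) * z * g z + of_real t * f z = 0"
      show False
      proof (cases "norm z < \<delta>")
        case True
        have gz: "g z \<noteq> 0" using gnz z by auto
        from eq have "of_real (1-t) * z = - of_real t * (f z / g z)"
          using gz by (auto simp: field_simps)
        then have "Re (of_real (1-t) * z) = Re (- of_real t * (f z / g z))" by (rule arg_cong)
        then have "(1-t) * Re z = - t * Re (f z / g z)" by (simp del: times_divide_eq_right)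
        moreover have "- t * Re (f z / g z) < 0" using near[OF True] t0 by simp
        moreover have "(1-t) * Re z \<ge> 0" using t1 z by simp
        ultimately show False by linarith
      next
        case False
        then have zK: "z \<in> K" unfolding K_def using z by auto
        from eq have "norm (of_real (1-t) * z * g z) = norm (of_real t * f z)"
          by (metis add_eq_0_iff norm_minus_cancel)
        moreover have "norm (of_real (1-t) :: complex) = 1 - t" using t1 by (metis abs_of_pos diff_gt_0_iff_gt norm_of_real)
        ultimately have "(1-t) * norm (z * g z) = t * norm (f z)"
          using t0 t1 by (simp add: norm_mult mult.assoc del: of_real_diff)
        moreover have "(1-t) * m \<le> (1-t) * norm (z * g z)" using mM[OF zK] t1 by simp
        moreover have "t * norm (f z) \<le> t * M" using mM[OF zK] t0 by simp
        ultimately have "(1-t) * m \<le> t * M" by linarith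
        then show False using tmM m by (simp add: algebra_simps)
      qed
    qed
  qed
qed



lemma eig_bound:
  fixes M :: "complex mat"
  assumes M: "M \<in> carrier_mat n n" and z: "poly (char_poly M) z = 0"
  shows "norm z \<le> (\<Sum>i<n. \<Sum>l<n. norm (M $$ (i,l)))"
proof -
  have "eigenvalue M z" using eigenvalue_root_char_poly[OF M] z by simp
  then obtain v where v: "v \<in> carrier_vec n" "v \<noteq> 0\<^sub>v n" "M *\<^sub>v v = z \<cdot>\<^sub>v v"
    unfolding eigenvalue_def eigenvector_def using M by auto
  obtain i0 where i0: "i0 < n" "v $ i0 \<noteq> 0"
    using v(1,2) by (metis carrier_vecD eq_vecI index_zero_vec(1,2))
  define N where "N = Max ((\<lambda>l. norm (v$l)) ` {..<n})"
  have fin: "finite ((\<lambda>l. norm (v$l)) ` {..<n})" "(\<lambda>l. norm (v$l)) ` {..<n} \<noteq> {}" using i0 by auto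
  obtain i where i: "i < n" "norm (v$i) = N"
    using Max_in[OF fin] unfolding N_def by auto
  have le: "norm (v$l) \<le> N" if "l < n" for l
    unfolding N_def using fin that by (intro Max_ge) auto
  have Npos: "N > 0" using le[OF i0(1)] i0(2) by (meson less_le_trans zero_less_norm_iff)
  have "(M *\<^sub>v v) $ i = z * v $ i" using v(3) v(1) i by (metis carrier_vecD index_smult_vec(1))
  moreover have "(M *\<^sub>v v) $ i = (\<Sum>l<n. M $$ (i,l) * v $ l)"
    using M v(1) i by (auto simp: scalar_prod_def lessThan_atLeast0 intro!: sum.cong)
  ultimately have eq: "z * v $ i = (\<Sum>l<n. M $$ (i,l) * v $ l)" by simp
  have "norm z * N = norm (\<Sum>l<n. M $$ (i,l) * v $ l)" using eq i(2) by (metis norm_mult)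
  also have "\<dots> \<le> (\<Sum>l<n. norm (M $$ (i,l)) * norm (v $ l))"
    by (rule order.trans[OF norm_sum], simp add: norm_mult)
  also have "\<dots> \<le> (\<Sum>l<n. norm (M $$ (i,l)) * N)"
    by (rule sum_mono, rule mult_left_mono, auto intro: le)
  also have "\<dots> = (\<Sum>l<n. norm (M $$ (i,l))) * N" by (simp add: sum_distrib_right)
  finally have "norm z \<le> (\<Sum>l<n. norm (M $$ (i,l)))" using Npos by simp
  also have "\<dots> \<le> (\<Sum>i<n. \<Sum>l<n. norm (M $$ (i,l)))"
    by (rule member_le_sum[of i "{..<n}" "\<lambda>i. \<Sum>l<n. norm (M $$ (i,l))"], insert i, auto intro: sum_nonneg)
  finally show ?thesis .
qed

lemma char_poly_nz: assumes "A \<in> carrier_mat n n" shows "char_poly A \<noteq> 0"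
  using degree_monic_char_poly[OF assms] by auto

lemma spec_iff:
  assumes A: "A \<in> carrier_mat n n"
  shows "z \<in># spec A \<longleftrightarrow> poly (char_poly (map_mat complex_of_real A)) z = 0"
proof -
  have "map_mat complex_of_real A \<in> carrier_mat n n" using A by simp
  from char_poly_nz[OF this] show ?thesis unfolding spec_def
    using set_count_proots by (metis mem_Collect_eq)
qed

lemma charpoly_pos0:
  fixes B :: "real mat"
  assumes B: "B \<in> carrier_mat n n" and st: "hurwitz_stable B"
  shows "poly (char_poly B) 0 > 0"
proof -
  let ?p = "char_poly B"
  have nr: "poly ?p x \<noteq> 0" if "x \<ge> 0" for x
  proof
    assume "poly ?p x = 0"
    then have "poly (char_poly (map_mat complex_of_real B)) (of_real x) = 0"
      unfolding of_real_hom.char_poly_hom[OF B] of_real_hom.poly_map_poly by simp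
    then have "of_real x \<in># spec B" using spec_iff[OF B] by simp
    then show False using st that unfolding hurwitz_stable_def by fastforce
  qed
  have lc: "lead_coeff ?p = 1" using degree_monic_char_poly[OF B] by simp
  obtain N where N: "\<And>x. x \<ge> N \<Longrightarrow> poly ?p x \<ge> 1"
    using poly_pinfty_gt_lc[of ?p] lc by auto
  have X: "poly ?p (max N 1) > 0" using N[of "max N 1"] by simp
  show ?thesis
  proof (rule ccontr)
    assume "\<not> ?thesis"
    then have "poly ?p 0 < 0" using nr[of 0] by linarith
    have m0: "0 < max N (1::real)" by simp
    from poly_IVT_pos[OF m0 \<open>poly ?p 0 < 0\<close> X] obtain x where "0 < x" "poly ?p x = 0" by auto
    then show False using nr by auto
  qed
qed

lemma poly_char_0:
  fixes A :: "real mat"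
  assumes A: "A \<in> carrier_mat n n"
  shows "poly (char_poly A) 0 = (-1)^n * Determinant.det A"
proof -
  have "poly (char_poly A) 0 = Determinant.det (- char_matrix A 0)" by (rule char_poly_matrix[OF A])
  also have "- char_matrix A 0 = (-1) \<cdot>\<^sub>m A" using A
    by (auto intro!: eq_matI simp: char_matrix_def)
  also have "Determinant.det \<dots> = (-1)^n * Determinant.det A" using A by simp
  finally show ?thesis .
qed



theorem mainTheorem15:
  fixes s p S :: "real mat" and n r k :: nat
    and \<kappa> E :: "nat set" and J :: "nat \<Rightarrow> nat"
  assumes "s \<in> carrier_mat n r" and "p \<in> carrier_mat n r"
    and "\<forall>i<n. \<forall>j<r. s $$ (i,j) \<ge> 0 \<and> p $$ (i,j) \<ge> 0"
    and "S = p - s"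
    and "child_selection s k \<kappa> E J"
    and "unstable_negative_feedback (CS_matrix S \<kappa> J)"
    and "\<exists>I \<subseteq> {0..<k}. card I = k - 1 \<and> hurwitz_stable (principal_sub (CS_matrix S \<kappa> J) I)"
  shows "D_Hopf (CS_matrix S \<kappa> J)"
proof -
  define A where "A = CS_matrix S \<kappa> J"
  have ck: "card \<kappa> = k" using assms(5) unfolding child_selection_def by auto
  have A: "A \<in> carrier_mat k k" unfolding A_def CS_matrix_def ck by simp
  have dA: "dim_row A = k" using A by simp
  from assms(6) have unst: "hurwitz_unstable A" and sg: "sgn (Determinant.det A) = (-1)^k"
    unfolding unstable_negative_feedback_def unstable_core_def A_def[symmetric] dA by auto
  obtain I where I: "I \<subseteq> {0..<k}" "card I = k - 1" "hurwitz_stable (principal_sub A I)"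
    using assms(7) A_def by auto
  from unst obtain z0 where z0: "z0 \<in># spec A" "Re z0 > 0" by (auto simp: hurwitz_unstable_def)
  have k0: "k > 0"
  proof (rule ccontr)
    assume "\<not> k > 0" then have k: "k = 0" by simp
    let ?p = "char_poly (map_mat complex_of_real A)"
    have "map_mat complex_of_real A \<in> carrier_mat 0 0" using A k by simp
    from degree_monic_char_poly[OF this] have "degree ?p = 0" "coeff ?p 0 = 1" by auto
    then have "?p = [:1:]" by (metis degree_0_id)
    moreover have "poly ?p z0 = 0" using z0 spec_iff[OF A] by simp
    ultimately show False by simp
  qed
  have Ine: "I \<noteq> {0..<k}" using I(2) k0 by auto
  have "\<exists>j. j < k \<and> j \<notin> I"
  proof (rule ccontr)
    assume "\<not> ?thesis"
    then have "{0..<k} \<subseteq> I" by auto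
    then show False using I(1) Ine by auto
  qed
  then obtain j where j: "j < k" "j \<notin> I" by blast
  have Ieq: "I = {0..<k} - {j}"
  proof -
    have "I \<subseteq> {0..<k} - {j}" using I(1) j by auto
    moreover have "card ({0..<k} - {j}) = card I" using I(2) j by simp
    ultimately show ?thesis by (metis card_subset_eq finite_Diff finite_atLeastLessThan)
  qed
  define B where "B = mat_delete A j j"
  have B: "B \<in> carrier_mat (k-1) (k-1)" unfolding B_def by (rule mat_delete_carrier[OF A])
  have stB: "hurwitz_stable B" using I(3) Ieq principal_sub_delete[OF A j(1)] B_def by simp
  define f where "f = (\<lambda>z. poly (map_poly complex_of_real (char_poly A)) z)"
  define g where "g = (\<lambda>z. poly (map_poly complex_of_real (char_poly B)) z)"
  have cf: "continuous_on UNIV f" unfolding f_def by (intro continuous_intros)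
  have cg: "continuous_on UNIV g" unfolding g_def by (intro continuous_intros)
  have gnz: "g z \<noteq> 0" if "0 \<le> Re z" for z
  proof
    assume "g z = 0"
    then have "z \<in># spec B" unfolding spec_iff[OF B] g_def of_real_hom.char_poly_hom[OF B] .
    then show False using stB that unfolding hurwitz_stable_def by fastforce
  qed
  have detnz: "Determinant.det A \<noteq> 0" using sg by (metis sgn_zero power_eq_0_iff zero_neq_neg_one)
  have dpos: "(-1)^k * Determinant.det A > 0"
  proof -
    have "(-1)^k * Determinant.det A = sgn (Determinant.det A) * Determinant.det A" using sg by simp
    also have "\<dots> = \<bar>Determinant.det A\<bar>" by (simp add: sgn_if abs_if)
    finally show ?thesis using detnz by simp
  qed
  have f0: "f 0 = of_real ((-1)^k * Determinant.det A)"
    unfolding f_def of_real_hom.poly_map_poly_0 poly_char_0[OF A] ..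
  have g0: "g 0 = of_real (poly (char_poly B) 0)"
    unfolding g_def of_real_hom.poly_map_poly_0 ..
  have bpos: "poly (char_poly B) 0 > 0" by (rule charpoly_pos0[OF B stB])
  have pos: "Re (f 0 / g 0) > 0" unfolding f0 g0
    using dpos bpos by (simp del: of_real_mult of_real_power)
  define R where "R = (\<Sum>i<k. \<Sum>l<k. norm (map_mat complex_of_real A $$ (i,l)))"
  obtain t where t0: "0 < t" and t1: "t < 1"
    and tz: "\<And>z. 0 \<le> Re z \<Longrightarrow> norm z \<le> R \<Longrightarrow> of_real (1-t) * z * g z + of_real t * f z \<noteq> 0"
    using core[OF cf cg gnz pos, of R] by auto
  define d where "d = (\<lambda>a. if a = j then t else (1::real))"
  define D where "D = Matrix.mat k k (\<lambda>(a,b). if a = b then d a else 0)"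
  define M where "M = Matrix.mat k k (\<lambda>(i,l). A $$ (i,l) * (if l = j then t else 1))"
  have AD: "A * D = M" unfolding D_def M_def mult_diag[OF A] d_def by simp
  have Mc: "M \<in> carrier_mat k k" unfolding M_def by simp
  have cpM0: "char_poly M = Polynomial.smult t (char_poly A) + Polynomial.smult (1 - t) (monom 1 1 * char_poly B)"
    unfolding M_def B_def by (rule char_poly_split[OF A j(1)])
  have cpM: "char_poly (map_mat complex_of_real M) = map_poly complex_of_real
      (Polynomial.smult t (char_poly A) + Polynomial.smult (1 - t) (monom 1 1 * char_poly B))"
    unfolding of_real_hom.char_poly_hom[OF Mc] cpM0 ..
  have evalM: "poly (char_poly (map_mat complex_of_real M)) z = of_real (1-t) * z * g z + of_real t * f z" for z
  proof -
    have xm: "monom 1 1 * char_poly B = pCons 0 (char_poly B)" unfolding x_as_monom[symmetric] by simp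
    show ?thesis unfolding cpM xm f_def g_def by (simp add: hom_distribs algebra_simps)
  qed
  have noRe: "\<not> Re z > 0" if z: "z \<in># spec M" for z
  proof
    assume Rz: "Re z > 0"
    have Mc': "map_mat complex_of_real M \<in> carrier_mat k k" using Mc by simp
    have pz: "poly (char_poly (map_mat complex_of_real M)) z = 0" using z spec_iff[OF Mc] by simp
    have "norm z \<le> (\<Sum>i<k. \<Sum>l<k. norm (map_mat complex_of_real M $$ (i,l)))"
      by (rule eig_bound[OF Mc' pz])
    also have "\<dots> \<le> R" unfolding R_def
    proof (intro sum_mono)
      fix i l assume "i \<in> {..<k}" "l \<in> {..<k}"
      then show "norm (map_mat complex_of_real M $$ (i,l)) \<le> norm (map_mat complex_of_real A $$ (i,l))"
      proof -
        have "\<bar>A $$ (i,l) * t\<bar> \<le> \<bar>A $$ (i,l)\<bar>" using t0 t1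
          by (simp add: abs_mult mult_left_le)
        then show ?thesis using \<open>i \<in> {..<k}\<close> \<open>l \<in> {..<k}\<close> A
          by (auto simp: M_def simp del: of_real_mult simp flip: of_real_mult)
      qed
    qed
    finally have "norm z \<le> R" .
    then show False using tz[of z] Rz pz evalM[of z] by simp
  qed
  have inertia_ne: "inertia (A * 1\<^sub>m k) \<noteq> inertia (A * D)"
  proof
    assume eq: "inertia (A * 1\<^sub>m k) = inertia (A * D)"
    have e1: "A * 1\<^sub>m k = A" using A by simp
    have h1: "size (filter_mset (\<lambda>z. Re z > 0) (spec A)) > 0"
    proof -
      have "z0 \<in># filter_mset (\<lambda>z. Re z > 0) (spec A)" using z0 by simp
      then have "filter_mset (\<lambda>z. Re z > 0) (spec A) \<noteq> {#}" by auto
      then show ?thesis using nonempty_has_size by blast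
    qed
    have h2: "filter_mset (\<lambda>z. Re z > 0) (spec M) = {#}"
    proof -
      have "\<forall>x. x \<notin># filter_mset (\<lambda>z. Re z > 0) (spec M)" using noRe by auto
      then show ?thesis by (meson multiset_nonemptyE)
    qed
    have "fst (snd (inertia (A * 1\<^sub>m k))) = fst (snd (inertia (A * D)))" using eq by simp
    then have "size (filter_mset (\<lambda>z. Re z > 0) (spec A)) = size (filter_mset (\<lambda>z. Re z > 0) (spec M))"
      unfolding e1 AD inertia_def by simp
    then show False using h1 h2 by (metis less_irrefl size_empty)
  qed
  have invA: "invertible_mat A"
  proof -
    have "A \<in> Units (ring_mat TYPE(real) k undefined)" by (rule det_non_zero_imp_unit[OF A detnz])
    then obtain B' where "B' \<in> carrier_mat k k" "B' * A = 1\<^sub>m k" "A * B' = 1\<^sub>m k"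
      unfolding Units_def ring_mat_def by auto
    then show ?thesis unfolding invertible_mat_def inverts_mat_def square_mat.simps using A by auto
  qed
  have pd1: "pos_diag k (1\<^sub>m k)" unfolding pos_diag_def diagonal_mat_def by auto
  have pd2: "pos_diag k D" unfolding pos_diag_def diagonal_mat_def D_def d_def using t0 by auto
  show ?thesis unfolding A_def[symmetric] D_Hopf_def
    by (intro exI[of _ "{0..<k}"] conjI exI[of _ "1\<^sub>m k"] exI[of _ D],
        insert invA pd1 pd2 inertia_ne principal_sub_full[OF A] dA, auto)
qed

end
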